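(* Let $n\ge 1$ be an integer and let $\mathcal{F}\subseteq\mathbb{Z}_{2^n}$. If $\mathcal{F}$ does not contain a projective $2$-cube, then $|\mathcal{F}|\le |L_1|=2^{n-1}$.
   Context: All arithmetic is in the cyclic group $\mathbb{Z}_{2^n}$. For a multiset $S=\{a_1,\dots,a_d\}$ of $d$ (not necessarily distinct) elements of $\mathbb{Z}_{2^n}$, the projective $d$-cube generated by $S$ is the set $\Sigma^*S=\{\sum_{i\in I}a_i \bmod 2^n:\emptyset\ne I\subseteq[d]\}$. A set $A$ contains a projective $d$-cube if $\Sigma^*S\subseteq A$ for some multiset $S$ of size $d$. Thus a projective $2$-cube is a set $\{a,b,a+b\}$ (with $a=b$ allowed, giving $\{a,2a\}$). Layers: for $1\le i\le n$, $L_i=\{x\in\mathbb{Z}_{2^n}: x\equiv 2^{i-1}\pmod{2^i}\}$, and $L_{n+1}=\{0\}$; so $L_1$ is the set of odd residues. *)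

theory Defs
  imports Main
begin

text \<open>Z_{2^n} is modelled by the residues {0..<2^n} (naturals), addition mod 2^n.
  A multiset S of d elements is modelled by a list of length d.\<close>

definition proj_cube :: "nat \<Rightarrow> nat list \<Rightarrow> nat set" where
  "proj_cube n S = {(\<Sum>i\<in>I. S ! i) mod 2^n | I. I \<noteq> {} \<and> I \<subseteq> {..<length S}}"

definition contains_proj_cube :: "nat \<Rightarrow> nat \<Rightarrow> nat set \<Rightarrow> bool" where
  "contains_proj_cube n d A \<longleftrightarrow>
     (\<exists>S. length S = d \<and> set S \<subseteq> {..<2^n} \<and> proj_cube n S \<subseteq> A)"

definition layer :: "nat \<Rightarrow> nat \<Rightarrow> nat set" where
  "layer n i = (if i = n + 1 then {0}
               else {x \<in> {..<2^n}. x mod 2^i = 2^(i-1)})"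

end

theory Submission
  imports Defs "HOL-Number_Theory.Cong"
begin

lemma sub2: "I \<subseteq> {..<2::nat} \<Longrightarrow> I \<noteq> {} \<Longrightarrow> I = {0} \<or> I = {1} \<or> I = {0,1}"
proof -
  assume a: "I \<subseteq> {..<2::nat}" "I \<noteq> {}"
  have "{..<2::nat} = {0,1}" by auto
  then have "I \<in> Pow {0,1}" using a by auto
  then show ?thesis using a by (auto simp: Pow_insert)
qed

lemma inj_add: "(a + x) mod (N::nat) = (a + y) mod N \<Longrightarrow> x < N \<Longrightarrow> y < N \<Longrightarrow> x = y"
proof -
  assume h: "(a + x) mod (N::nat) = (a + y) mod N" "x < N" "y < N"
  have "[a + x = a + y] (mod N)" using h(1) unfolding cong_def .
  then have "[x = y] (mod N)" by (simp add: cong_add_lcancel_nat)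
  then show "x = y" using h unfolding cong_def by simp
qed
lemma cube2: "proj_cube n [a, x] \<subseteq> {a mod 2^n, x mod 2^n, (a + x) mod 2^n}"
proof
  fix y assume "y \<in> proj_cube n [a, x]"
  then obtain I where I: "I \<noteq> {}" "I \<subseteq> {..<length [a,x]}" "y = (\<Sum>i\<in>I. [a,x] ! i) mod 2^n"
    unfolding proj_cube_def by blast
  have "I \<subseteq> {..<2}" using I(2) by (simp add: numeral_2_eq_2)
  from sub2[OF this I(1)] show "y \<in> {a mod 2^n, x mod 2^n, (a + x) mod 2^n}"
    using I(3) by auto
qed

lemma layer1: "n \<ge> 1 \<Longrightarrow> card (layer n 1) = 2^(n-1)"
proof -
  assume n: "n \<ge> 1"
  then obtain m where m: "n = Suc m" by (cases n) auto
  have "layer n 1 = {x \<in> {..<2^n}. x mod 2 = 1}" using n by (simp add: layer_def)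
  also have "\<dots> = (\<lambda>k::nat. 2*k+1) ` {..<2^m}"
  proof (rule set_eqI, rule iffI)
    fix x :: nat assume "x \<in> {x \<in> {..<2^n}. x mod 2 = 1}"
    then have "x = 2*(x div 2)+1" "x div 2 < 2^m" using m by (auto, presburger)
    then show "x \<in> (\<lambda>k::nat. 2*k+1) ` {..<2^m}" by blast
  next
    fix x assume "x \<in> (\<lambda>k::nat. 2*k+1) ` {..<2^m}"
    then obtain k where k: "k < 2^m" "x = 2*k+1" by blast
    then show "x \<in> {x \<in> {..<2^n}. x mod 2 = 1}" using m by simp
  qed
  also have "card \<dots> = 2^m" by (subst card_image) (auto simp: inj_on_def)
  finally show ?thesis using m by simp
qed

theorem proposition1p5:
  fixes n :: nat and F :: "nat set"
  assumes "n \<ge> 1" and "F \<subseteq> {..<2^n}"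
    and "\<not> contains_proj_cube n 2 F"
  shows "card F \<le> card (layer n 1) \<and> card (layer n 1) = 2^(n-1)"
proof -
  have L: "card (layer n 1) = 2^(n-1)" using layer1 assms(1) .
  obtain m where m: "n = Suc m" using assms(1) by (cases n) auto
  have "card F \<le> 2^m"
  proof (cases "F = {}")
    case True then show ?thesis by simp
  next
    case False
    then obtain a where a: "a \<in> F" by blast
    define f where "f x = (a + x) mod 2^n" for x
    have fin: "finite F" using assms(2) finite_subset by blast
    have inj: "inj_on f F"
    proof
      fix x y assume xy: "x \<in> F" "y \<in> F" "f x = f y"
      then have "x < 2^n" "y < 2^n" using assms(2) by auto
      then show "x = y" using inj_add[of a x "2^n" y] xy(3) unfolding f_def by blast
    qed
    have disj: "F \<inter> f ` F = {}"
    proof (rule ccontr)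
      assume "F \<inter> f ` F \<noteq> {}"
      then obtain x where x: "x \<in> F" "f x \<in> F" by blast
      have lt: "a < 2^n" "x < 2^n" using a x assms(2) by auto
      then have "proj_cube n [a, x] \<subseteq> F" using cube2[of n a x] a x unfolding f_def by auto
      moreover have "set [a,x] \<subseteq> {..<2^n}" using lt by auto
      moreover have "length [a,x] = 2" by simp
      ultimately have "contains_proj_cube n 2 F" unfolding contains_proj_cube_def by blast
      then show False using assms(3) by blast
    qed
    have sub: "F \<union> f ` F \<subseteq> {..<2^n}" using assms(2) by (auto simp: f_def)
    have "card F + card (f ` F) = card (F \<union> f ` F)"
      using card_Un_disjoint[OF fin finite_imageI[OF fin] disj] by simp
    also have "\<dots> \<le> 2^n" using card_mono[OF _ sub] by simp
    finally have "card F + card F \<le> 2^n" using card_image[OF inj] by simp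
    then show ?thesis using m by simp
  qed
  then show ?thesis using L m by simp
qed

end
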